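(* If $\mathcal F_1$ and $\mathcal F_2$ are distributive forest algebras (finite or infinite), then $\mathcal F_1\wr\mathcal F_2$ is 2-distributive.
   Context: A forest algebra is a pair $(H,V)$ where $H$ is a monoid written additively, $V$ is a monoid written multiplicatively, and $V$ acts faithfully on $H$. For each $h$ there is $I_h\in V$ with $I_h h'=h+h'$, and each $h$ is of the form $v\cdot 0_H$. All forest algebras are horizontally commutative and idempotent ($h_1+h_2=h_2+h_1$, $h+h=h$). Morphisms preserve the monoid operations, the action and $h\mapsto I_h$. The free forest algebra $\Sigma^\Delta=(H_\Sigma,V_\Sigma)$ has as forest part the finite sets of unordered trees $\alpha[C]$ (with $\alpha\in\Sigma$ and $C$ a finite set of trees), under union. Its contexts are forests with one leaf replaced by a hole, acting by substitution. $\pi(f)$ is the prefix-closed set of root-starting (not necessarily maximal) label paths of a forest $f$. $(H,V)$ is distributive if $v(h_1+h_2)=vh_1+vh_2$ for all $v,h_1,h_2$. It is 2-distributive if for every finite alphabet $\Sigma$, every morphism $\phi:\Sigma^\Delta\to(H,V)$, every context $v$, and all forests $f_1,f_2$ with $\pi(f_1)=\pi(f_2)$, we have $\phi(v(f_1+f_2))=\phi(vf_1+vf_2)$. Wreath product: $(H_1,V_1)\wr(H_2,V_2)=(H_1\times H_2,\ V_1^{H_2}\times V_2)$. The action is $(f,v)(h_1,h_2)=(f(h_2)h_1,\ vh_2)$. Multiplication is $(f,v)(f',v')=(f'',vv')$ with $f''(h)=f(v'h)\cdot f'(h)$. $H_1\times H_2$ carries the direct product structure. *)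

theory Defs
  imports "HOL-Library.FSet"
begin

text \<open>A forest algebra structure: horizontal monoid (hz, hp), vertical monoid (vo, vm),
  the action act of V on H, and the map h \<mapsto> I_h (ins).\<close>

record ('h, 'v) fa =
  hz  :: 'h
  hp  :: "'h \<Rightarrow> 'h \<Rightarrow> 'h"
  vo  :: 'v
  vm  :: "'v \<Rightarrow> 'v \<Rightarrow> 'v"
  act :: "'v \<Rightarrow> 'h \<Rightarrow> 'h"
  ins :: "'h \<Rightarrow> 'v"

definition forest_algebra :: "('h, 'v, 'z) fa_scheme \<Rightarrow> bool" where
  "forest_algebra F \<longleftrightarrow>
     (\<forall>a b c. hp F (hp F a b) c = hp F a (hp F b c)) \<and>
     (\<forall>a. hp F (hz F) a = a \<and> hp F a (hz F) = a) \<and>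
     (\<forall>a b. hp F a b = hp F b a) \<and>
     (\<forall>a. hp F a a = a) \<and>
     (\<forall>u v w. vm F (vm F u v) w = vm F u (vm F v w)) \<and>
     (\<forall>v. vm F (vo F) v = v \<and> vm F v (vo F) = v) \<and>
     (\<forall>h. act F (vo F) h = h) \<and>
     (\<forall>v w h. act F (vm F v w) h = act F v (act F w h)) \<and>
     (\<forall>v w. (\<forall>h. act F v h = act F w h) \<longrightarrow> v = w) \<and>
     (\<forall>h h'. act F (ins F h) h' = hp F h h') \<and>
     (\<forall>h. \<exists>v. h = act F v (hz F))"

definition distributive :: "('h, 'v, 'z) fa_scheme \<Rightarrow> bool" where
  "distributive F \<longleftrightarrow> (\<forall>v h1 h2. act F v (hp F h1 h2) = hp F (act F v h1) (act F v h2))"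

definition fa_morphism ::
  "('h, 'v, 'z) fa_scheme \<Rightarrow> ('h2, 'v2, 'z2) fa_scheme \<Rightarrow> ('h \<Rightarrow> 'h2) \<Rightarrow> ('v \<Rightarrow> 'v2) \<Rightarrow> bool" where
  "fa_morphism F G \<phi>H \<phi>V \<longleftrightarrow>
     \<phi>H (hz F) = hz G \<and>
     (\<forall>a b. \<phi>H (hp F a b) = hp G (\<phi>H a) (\<phi>H b)) \<and>
     \<phi>V (vo F) = vo G \<and>
     (\<forall>v w. \<phi>V (vm F v w) = vm G (\<phi>V v) (\<phi>V w)) \<and>
     (\<forall>v h. \<phi>H (act F v h) = act G (\<phi>V v) (\<phi>H h)) \<and>
     (\<forall>h. \<phi>V (ins F h) = ins G (\<phi>H h))"

datatype 'a tree = Node 'a "'a tree fset"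

type_synonym 'a forest = "'a tree fset"

text \<open>Contexts (forests with exactly one hole at a leaf position), uniquely represented:
  CHole F denotes F + \<box>, CNode F a c denotes F + a[c].\<close>
datatype 'a ctx = CHole "'a forest" | CNode "'a forest" 'a "'a ctx"

fun capp :: "'a ctx \<Rightarrow> 'a forest \<Rightarrow> 'a forest" where
  "capp (CHole F) f = F |\<union>| f"
| "capp (CNode F a c) f = finsert (Node a (capp c f)) F"

fun cadd :: "'a forest \<Rightarrow> 'a ctx \<Rightarrow> 'a ctx" where
  "cadd F (CHole G) = CHole (F |\<union>| G)"
| "cadd F (CNode G a c) = CNode (F |\<union>| G) a c"

fun ccomp :: "'a ctx \<Rightarrow> 'a ctx \<Rightarrow> 'a ctx" where
  "ccomp (CHole F) d = cadd F d"
| "ccomp (CNode F a c) d = CNode F a (ccomp c d)"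

definition free_fa :: "'a itself \<Rightarrow> ('a forest, 'a ctx) fa" where
  "free_fa _ = \<lparr> hz = {||}, hp = (|\<union>|), vo = CHole {||}, vm = ccomp, act = capp,
                 ins = CHole \<rparr>"

text \<open>pi(f): the prefix-closed set of root-starting label paths of a forest.\<close>
inductive is_path :: "'a forest \<Rightarrow> 'a list \<Rightarrow> bool" where
  path_nil: "is_path f []"
| path_cons: "Node a C |\<in>| f \<Longrightarrow> is_path C p \<Longrightarrow> is_path f (a # p)"

definition paths :: "'a forest \<Rightarrow> 'a list set" where
  "paths f = {p. is_path f p}"

text \<open>2-distributivity with respect to a (finite) alphabet type 'a; the theorem quantifies
  over all finite types 'a.\<close>
definition two_distributive_over :: "'a itself \<Rightarrow> ('h, 'v, 'z) fa_scheme \<Rightarrow> bool" where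
  "two_distributive_over T F \<longleftrightarrow>
     (\<forall>\<phi>H \<phi>V. fa_morphism (free_fa T) F \<phi>H \<phi>V \<longrightarrow>
        (\<forall>v f1 f2. paths f1 = paths f2 \<longrightarrow>
           \<phi>H (capp v (f1 |\<union>| f2)) = \<phi>H (capp v f1 |\<union>| capp v f2)))"

definition wreath :: "('h1, 'v1, 'z1) fa_scheme \<Rightarrow> ('h2, 'v2, 'z2) fa_scheme \<Rightarrow>
    ('h1 \<times> 'h2, ('h2 \<Rightarrow> 'v1) \<times> 'v2) fa" where
  "wreath F1 F2 = \<lparr>
     hz = (hz F1, hz F2),
     hp = (\<lambda>(a1, a2) (b1, b2). (hp F1 a1 b1, hp F2 a2 b2)),
     vo = (\<lambda>_. vo F1, vo F2),
     vm = (\<lambda>(f, v) (f', v'). (\<lambda>h. vm F1 (f (act F2 v' h)) (f' h), vm F2 v v')),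
     act = (\<lambda>(f, v) (h1, h2). (act F1 (f h2) h1, act F2 v h2)),
     ins = (\<lambda>(h1, h2). (\<lambda>_. ins F1 h1, ins F2 h2)) \<rparr>"

end

theory Submission
  imports Defs
begin

lemma is_path_cons: "is_path f (x # p) \<longleftrightarrow> (\<exists>C. Node x C |\<in>| f \<and> is_path C p)"
  by (auto elim: is_path.cases intro: is_path.intros)

lemma is_path_mono: "is_path f p \<Longrightarrow> f |\<subseteq>| g \<Longrightarrow> is_path g p"
  by (induction rule: is_path.induct) (auto intro: is_path.intros)

lemma paths_le:
  fixes F2 :: "('h2, 'v2) fa" and b :: "'a forest \<Rightarrow> 'h2"
  assumes fa: "forest_algebra F2" and d: "distributive F2"
    and b0: "b {||} = hz F2"
    and bu: "\<And>f g. b (f |\<union>| g) = hp F2 (b f) (b g)"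
    and bn: "\<And>x t. b {|Node x t|} = act F2 (\<beta> x) (b t)"
  shows "paths f \<subseteq> paths g \<Longrightarrow> hp F2 (b f) (b g) = b g"
proof -
  have assoc: "\<And>a c e. hp F2 (hp F2 a c) e = hp F2 a (hp F2 c e)"
    and zl: "\<And>a. hp F2 (hz F2) a = a" and zr: "\<And>a. hp F2 a (hz F2) = a"
    and comm: "\<And>a c. hp F2 a c = hp F2 c a"
    and idem: "\<And>a. hp F2 a a = a"
    using fa unfolding forest_algebra_def by auto
  have dist: "\<And>v h1 h2. act F2 v (hp F2 h1 h2) = hp F2 (act F2 v h1) (act F2 v h2)"
    using d unfolding distributive_def by auto
  define le where "le u w \<longleftrightarrow> hp F2 u w = w" for u w
  have le_trans: "le u w \<Longrightarrow> le w z \<Longrightarrow> le u z" for u w z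
    unfolding le_def by (metis assoc)
  have le_lub: "le u z \<Longrightarrow> le w z \<Longrightarrow> le (hp F2 u w) z" for u w z
    unfolding le_def by (metis assoc)
  have le_act: "le u w \<Longrightarrow> le (act F2 v u) (act F2 v w)" for u w v
    unfolding le_def by (metis dist)
  have le_sub: "f |\<subseteq>| g \<Longrightarrow> le (b f) (b g)" for f g
  proof -
    assume "f |\<subseteq>| g"
    then have "g = f |\<union>| (g |-| f)" by auto
    then have "b g = hp F2 (b f) (b (g |-| f))" using bu by metis
    then show ?thesis unfolding le_def by (metis assoc idem)
  qed
  have le_forest: "(\<And>t. t |\<in>| f \<Longrightarrow> le (b {|t|}) B) \<Longrightarrow> le (b f) B" for f B
  proof (induction f rule: fset_induct)
    case empty then show ?case unfolding le_def using b0 zl by simp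
  next
    case (insert t f)
    have "finsert t f = {|t|} |\<union>| f" by auto
    then have "b (finsert t f) = hp F2 (b {|t|}) (b f)" using bu by metis
    then show ?case using insert le_lub by auto
  qed
  have img: "S \<noteq> {||} \<Longrightarrow> b (Node x |`| S) = act F2 (\<beta> x) (b (ffUnion S))" for S x
  proof (induction S rule: fset_induct)
    case empty then show ?case by simp
  next
    case (insert t S)
    show ?case
    proof (cases "S = {||}")
      case True then show ?thesis using bn by simp
    next
      case False
      have "Node x |`| finsert t S = {|Node x t|} |\<union>| (Node x |`| S)" by auto
      then have "b (Node x |`| finsert t S) = hp F2 (b {|Node x t|}) (b (Node x |`| S))"
        using bu by metis
      also have "\<dots> = act F2 (\<beta> x) (hp F2 (b t) (b (ffUnion S)))"
        using insert False bn dist by simp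
      also have "hp F2 (b t) (b (ffUnion S)) = b (ffUnion (finsert t S))"
        using bu by simp
      finally show ?thesis .
    qed
  qed
  have P: "\<forall>g. paths {|t|} \<subseteq> paths g \<longrightarrow> le (b {|t|}) (b g)" for t
  proof (induction t)
    case (Node x C)
    have IHf: "paths C \<subseteq> paths G \<Longrightarrow> le (b C) (b G)" for G
    proof (rule le_forest)
      fix t assume tC: "t |\<in>| C" and pG: "paths C \<subseteq> paths G"
      have "paths {|t|} \<subseteq> paths C" unfolding paths_def
        using tC by (auto intro: is_path_mono)
      then show "le (b {|t|}) (b G)" using Node tC pG by auto
    qed
    show ?case
    proof (intro allI impI)
      fix g assume sub: "paths {|Node x C|} \<subseteq> paths g"
      define S where "S = (\<lambda>s. case s of Node _ c \<Rightarrow> c) |`| ffilter (\<lambda>s. case s of Node y _ \<Rightarrow> y = x) g"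
      have S1: "Node x C' |\<in>| g \<Longrightarrow> C' |\<in>| S" for C'
        unfolding S_def by (rule fimage_eqI[where x="Node x C'"]) auto
      have S2: "C' |\<in>| S \<Longrightarrow> Node x C' |\<in>| g" for C'
        unfolding S_def by (auto split: tree.splits)
      have "is_path {|Node x C|} [x]" by (auto intro: is_path.intros)
      then have "is_path g [x]" using sub unfolding paths_def by auto
      then obtain C0 where "Node x C0 |\<in>| g" using is_path_cons by metis
      then have Sne: "S \<noteq> {||}" using S1 by auto
      have "paths C \<subseteq> paths (ffUnion S)"
      proof
        fix p assume "p \<in> paths C"
        then have "is_path {|Node x C|} (x # p)" unfolding paths_def
          by (auto intro: is_path.intros)
        then have "is_path g (x # p)" using sub unfolding paths_def by auto
        then obtain C' where "Node x C' |\<in>| g" "is_path C' p" using is_path_cons by metis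
        moreover have "C' |\<subseteq>| ffUnion S" using S1[OF \<open>Node x C' |\<in>| g\<close>]
          by (metis finsert_absorb ffunion_insert funion_upper1)
        ultimately show "p \<in> paths (ffUnion S)" unfolding paths_def
          by (auto intro: is_path_mono)
      qed
      then have "le (b C) (b (ffUnion S))" by (rule IHf)
      then have "le (b {|Node x C|}) (b (Node x |`| S))"
        using le_act img[OF Sne] bn by simp
      moreover have "Node x |`| S |\<subseteq>| g" using S2 by auto
      ultimately show "le (b {|Node x C|}) (b g)" using le_sub le_trans by blast
    qed
  qed
  assume pfg: "paths f \<subseteq> paths g"
  have "le (b f) (b g)"
  proof (rule le_forest)
    fix t assume tf: "t |\<in>| f"
    from pfg tf have "paths {|t|} \<subseteq> paths g" unfolding paths_def
      by (auto intro: is_path_mono)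
    then show "le (b {|t|}) (b g)" using P by blast
  qed
  then show ?thesis unfolding le_def .
qed

theorem mainTheorem3:
  fixes F1 :: "('h1, 'v1) fa" and F2 :: "('h2, 'v2) fa"
  assumes "forest_algebra F1" and "distributive F1"
      and "forest_algebra F2" and "distributive F2"
  shows "two_distributive_over TYPE('a::finite) (wreath F1 F2)"
  unfolding two_distributive_over_def
proof (intro allI impI)
  fix \<phi>H :: "'a forest \<Rightarrow> 'h1 \<times> 'h2" and \<phi>V and v :: "'a ctx" and f1 f2 :: "'a forest"
  assume m: "fa_morphism (free_fa TYPE('a)) (wreath F1 F2) \<phi>H \<phi>V"
    and pe: "paths f1 = paths f2"
  have m0: "\<phi>H {||} = (hz F1, hz F2)"
    and mu: "\<And>f g. \<phi>H (f |\<union>| g) = hp (wreath F1 F2) (\<phi>H f) (\<phi>H g)"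
    and ma: "\<And>c f. \<phi>H (capp c f) = act (wreath F1 F2) (\<phi>V c) (\<phi>H f)"
    using m unfolding fa_morphism_def free_fa_def by (auto simp: wreath_def)
  define b where "b f = snd (\<phi>H f)" for f
  define \<beta> where "\<beta> x = snd (\<phi>V (CNode {||} x (CHole {||})))" for x
  have b0: "b {||} = hz F2" using m0 b_def by simp
  have bu: "\<And>f g. b (f |\<union>| g) = hp F2 (b f) (b g)"
    unfolding b_def mu by (auto simp: wreath_def split: prod.splits)
  have bn: "\<And>x t. b {|Node x t|} = act F2 (\<beta> x) (b t)"
  proof -
    fix x :: 'a and t :: "'a forest"
    have "b {|Node x t|} = snd (\<phi>H (capp (CNode {||} x (CHole {||})) t))"
      unfolding b_def by simp
    also have "\<dots> = snd (act (wreath F1 F2) (\<phi>V (CNode {||} x (CHole {||}))) (\<phi>H t))"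
      by (simp only: ma)
    also have "\<dots> = act F2 (\<beta> x) (b t)"
      unfolding b_def \<beta>_def by (auto simp: wreath_def split: prod.splits)
    finally show "b {|Node x t|} = act F2 (\<beta> x) (b t)" .
  qed
  have comm: "\<And>a c. hp F2 a c = hp F2 c a" and idem1: "\<And>a. hp F1 a a = a"
    and idem2: "\<And>a. hp F2 a a = a"
    using assms(1,3) unfolding forest_algebra_def by auto
  have "hp F2 (b f1) (b f2) = b f2"
    using paths_le[OF assms(3,4) b0 bu bn] pe by simp
  moreover have "hp F2 (b f2) (b f1) = b f1"
    using paths_le[OF assms(3,4) b0 bu bn] pe by simp
  ultimately have beq: "b f1 = b f2" using comm by metis
  obtain A1 B where e1: "\<phi>H f1 = (A1, B)" by (cases "\<phi>H f1")
  obtain A2 where e2: "\<phi>H f2 = (A2, B)" using beq e1 unfolding b_def by (cases "\<phi>H f2") auto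
  obtain g \<gamma> where ev: "\<phi>V v = (g, \<gamma>)" by (cases "\<phi>V v")
  have dist1: "\<And>v h1 h2. act F1 v (hp F1 h1 h2) = hp F1 (act F1 v h1) (act F1 v h2)"
    using assms(2) unfolding distributive_def by auto
  show "\<phi>H (capp v (f1 |\<union>| f2)) = \<phi>H (capp v f1 |\<union>| capp v f2)"
    unfolding ma mu e1 e2 ev by (simp add: wreath_def idem2 dist1)
qed

end
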